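(* Let $P$ be a trajectory set consisting of lines parallel to a vector $q\in\mathbb{R}^d\setminus\{0\}$, and let $\Lambda=P\cap q^\perp$. Then $D^-(\Lambda)=\ell^-(P)$ and $D^+(\Lambda)=\ell^+(P)$. In particular, $P$ is homogeneous if and only if $D^-(\Lambda)=D^+(\Lambda)$, and in this case \[ \ell(P)=D^-(\Lambda)=D^+(\Lambda)=\lim_{a\to\infty}\frac{\#(\Lambda\cap B_a^{d-1}(x))}{|B_a^{d-1}|}\quad\text{for all }x\in q^\perp\cong\mathbb{R}^{d-1}. \]
   Context: $q^\perp=\{x:\langle x,q\rangle=0\}$, identified with $\mathbb{R}^{d-1}$. For $\Lambda\subseteq\mathbb{R}^{d-1}$: $D^-(\Lambda)=\liminf_{a\to\infty}\inf_x\#(\Lambda\cap B_a^{d-1}(x))/|B_a^{d-1}|$, $D^+(\Lambda)=\limsup_{a\to\infty}\sup_x\#(\Lambda\cap B_a^{d-1}(x))/|B_a^{d-1}|$, with $B_a^{n}(x)$ the closed ball. A trajectory set is a countable collection of trajectories (images of curves $\mathbb{R}\to\mathbb{R}^d$ rectifiable on bounded intervals), identified with their union. $\mathcal{M}^P(a,x)$ is the total arc length of trajectories of $P$ inside $B_a^d(x)$; $\ell^-(P)=\liminf_{a\to\infty}\inf_{x\in\mathbb{R}^d}\mathcal{M}^P(a,x)/|B_a^d|$, $\ell^+(P)=\limsup_{a\to\infty}\sup_{x\in\mathbb{R}^d}\mathcal{M}^P(a,x)/|B_a^d|$; $P$ is homogeneous if $\ell^-(P)=\ell^+(P)=:\ell(P)$.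 *)

theory Defs
  imports "HOL-Analysis.Analysis"
begin

definition perp :: "'a::euclidean_space \<Rightarrow> 'a set" where
  "perp q = {x. x \<bullet> q = 0}"

definition ball_volume :: "nat \<Rightarrow> real \<Rightarrow> ennreal" where
  "ball_volume n a = ennreal (unit_ball_vol (real n) * a ^ n)"

text \<open>Lower and upper densities of a point set Lambda contained in q-perp, where q-perp
  (with the induced Euclidean metric) is identified with R^(d-1), d = DIM('a).\<close>
definition lower_density :: "'a::euclidean_space \<Rightarrow> 'a set \<Rightarrow> ennreal" where
  "lower_density q \<Lambda> = Liminf at_top (\<lambda>a::real. INF x\<in>perp q.
      emeasure (count_space UNIV) (\<Lambda> \<inter> cball x a) / ball_volume (DIM('a) - 1) a)"

definition upper_density :: "'a::euclidean_space \<Rightarrow> 'a set \<Rightarrow> ennreal" where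
  "upper_density q \<Lambda> = Limsup at_top (\<lambda>a::real. SUP x\<in>perp q.
      emeasure (count_space UNIV) (\<Lambda> \<inter> cball x a) / ball_volume (DIM('a) - 1) a)"

text \<open>A trajectory set is represented by a countable set of curves real \<Rightarrow> 'a; the point set
  P is the union of their images.\<close>
definition traj_union :: "(real \<Rightarrow> 'a) set \<Rightarrow> 'a set" where
  "traj_union T = (\<Union>\<gamma>\<in>T. range \<gamma>)"

definition arc_length_in :: "(real \<Rightarrow> 'a::real_normed_vector) \<Rightarrow> 'a set \<Rightarrow> ennreal" where
  "arc_length_in \<gamma> S = (\<integral>\<^sup>+ t. indicator {t. \<gamma> t \<in> S} t *
      ennreal (norm (vector_derivative \<gamma> (at t))) \<partial>lborel)"

definition traj_mass :: "(real \<Rightarrow> 'a::euclidean_space) set \<Rightarrow> real \<Rightarrow> 'a \<Rightarrow> ennreal" where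
  "traj_mass T a x = (\<integral>\<^sup>+ \<gamma>. arc_length_in \<gamma> (cball x a) \<partial>count_space T)"

definition lower_line_density :: "(real \<Rightarrow> 'a::euclidean_space) set \<Rightarrow> ennreal" where
  "lower_line_density T = Liminf at_top (\<lambda>a::real. INF x. traj_mass T a x / emeasure lborel (cball (0::'a) a))"

definition upper_line_density :: "(real \<Rightarrow> 'a::euclidean_space) set \<Rightarrow> ennreal" where
  "upper_line_density T = Limsup at_top (\<lambda>a::real. SUP x. traj_mass T a x / emeasure lborel (cball (0::'a) a))"

definition homogeneous :: "(real \<Rightarrow> 'a::euclidean_space) set \<Rightarrow> bool" where
  "homogeneous T \<longleftrightarrow> lower_line_density T = upper_line_density T"

definition line_density :: "(real \<Rightarrow> 'a::euclidean_space) set \<Rightarrow> ennreal" where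
  "line_density T = lower_line_density T"

definition line_curve :: "'a::euclidean_space \<Rightarrow> 'a \<Rightarrow> real \<Rightarrow> 'a" where
  "line_curve q b = (\<lambda>t. b + t *\<^sub>R q)"

end

theory Submission
  imports Defs "HOL-Real_Asymp.Real_Asymp"
begin

definition slab :: "'a::euclidean_space \<Rightarrow> 'a set" where
  "slab u = {z. 0 \<le> z \<bullet> u \<and> z \<bullet> u \<le> 1}"

lemma closed_slab: "closed (slab u)"
  unfolding slab_def by (intro closed_Collect_conj closed_Collect_le continuous_intros)

lemma slab_borel[measurable]: "slab u \<in> sets borel"
  using closed_slab by (rule borel_closed)

lemma coreT:
  fixes u :: "'a::euclidean_space" and f :: "'a \<Rightarrow> ennreal"
  assumes u: "norm u = 1" and f[measurable]: "f \<in> borel_measurable borel"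
  shows "(\<integral>\<^sup>+z. indicator (slab u) z * (\<integral>\<^sup>+s. f (z - s *\<^sub>R u) \<partial>lborel) \<partial>lborel) = (\<integral>\<^sup>+z. f z \<partial>lborel)"
proof -
  have uu: "u \<bullet> u = 1" using u by (simp add: norm_eq_1)
  have "(\<integral>\<^sup>+z. indicator (slab u) z * (\<integral>\<^sup>+s. f (z - s *\<^sub>R u) \<partial>lborel) \<partial>lborel)
     = (\<integral>\<^sup>+z. (\<integral>\<^sup>+s. indicator (slab u) z * f (z - s *\<^sub>R u) \<partial>lborel) \<partial>lborel)"
    by (intro nn_integral_cong) (simp add: nn_integral_cmult)
  also have "\<dots> = (\<integral>\<^sup>+s. (\<integral>\<^sup>+z. indicator (slab u) z * f (z - s *\<^sub>R u) \<partial>lborel) \<partial>(lborel::real measure))"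
    by (rule lborel_pair.Fubini'[symmetric]) measurable
  also have "\<dots> = (\<integral>\<^sup>+s. (\<integral>\<^sup>+w. indicator (slab u) (s *\<^sub>R u + w) * f w \<partial>lborel) \<partial>(lborel::real measure))"
  proof -
    have eq: "(\<integral>\<^sup>+z. indicator (slab u) z * f (z - s *\<^sub>R u) \<partial>lborel) = (\<integral>\<^sup>+w. indicator (slab u) (s *\<^sub>R u + w) * f w \<partial>lborel)" for s :: real
    proof -
    have "(\<integral>\<^sup>+z. indicator (slab u) z * f (z - s *\<^sub>R u) \<partial>lborel) =
       (\<integral>\<^sup>+z. indicator (slab u) z * f (z - s *\<^sub>R u) \<partial>(distr lborel borel ((+) (s *\<^sub>R u))))"
      by (simp add: lborel_distr_plus)
    also have "\<dots> = (\<integral>\<^sup>+w. indicator (slab u) (s *\<^sub>R u + w) * f w \<partial>lborel)"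
      by (subst nn_integral_distr) auto
    finally show ?thesis .
  qed
  then show ?thesis by simp
  qed
  also have "\<dots> = (\<integral>\<^sup>+w. (\<integral>\<^sup>+s. indicator (slab u) (s *\<^sub>R u + w) * f w \<partial>(lborel::real measure)) \<partial>lborel)"
    by (rule lborel_pair.Fubini') measurable
  also have "\<dots> = (\<integral>\<^sup>+w. f w \<partial>lborel)"
  proof -
    have eq: "(\<integral>\<^sup>+s. indicator (slab u) (s *\<^sub>R u + w) * f w \<partial>(lborel::real measure)) = f w" for w
    proof -
    have "indicator (slab u) (s *\<^sub>R u + w) = (indicator {- (w \<bullet> u) .. 1 - w \<bullet> u} s :: ennreal)" for s
      by (auto simp: slab_def indicator_def inner_simps uu)
    then have "(\<integral>\<^sup>+s. indicator (slab u) (s *\<^sub>R u + w) * f w \<partial>(lborel::real measure))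
       = (\<integral>\<^sup>+s. f w * indicator {- (w \<bullet> u) .. 1 - w \<bullet> u} s \<partial>lborel)"
      by (simp add: mult.commute)
    also have "\<dots> = f w" by (simp add: nn_integral_cmult_indicator)
    finally show ?thesis .
  qed
  then show ?thesis by simp
  qed
  finally show ?thesis .
qed


definition Pj :: "'a::euclidean_space \<Rightarrow> 'a \<Rightarrow> 'a" where
  "Pj u z = z - (z \<bullet> u) *\<^sub>R u"

lemma continuous_Pj[continuous_intros]: "continuous_on S (\<lambda>z. Pj u z)"
  unfolding Pj_def by (intro continuous_intros)

lemma Pj_borel[measurable]: "Pj u \<in> borel_measurable borel"
  by (intro borel_measurable_continuous_onI continuous_Pj)

lemma Pj_inner: "norm u = 1 \<Longrightarrow> Pj u z \<bullet> u = 0"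
  by (simp add: Pj_def inner_simps norm_eq_1)

lemma Pj_add_line: "norm u = 1 \<Longrightarrow> Pj u (Pj u z + s *\<^sub>R u) = Pj u z"
  by (simp add: Pj_def inner_simps norm_eq_1 algebra_simps)

lemma Pj_perp: "norm u = 1 \<Longrightarrow> y \<bullet> u = 0 \<Longrightarrow> Pj u (y + z) = y + Pj u z"
  by (simp add: Pj_def inner_simps algebra_simps)

lemma norm_Pj_line: 
  assumes "norm u = 1" "w \<bullet> u = 0"
  shows "norm (w + s *\<^sub>R u) ^ 2 = norm w ^ 2 + s ^ 2"
proof -
  have "norm (w + s *\<^sub>R u) ^ 2 = (w + s *\<^sub>R u) \<bullet> (w + s *\<^sub>R u)" by (simp add: power2_norm_eq_inner)
  also have "\<dots> = w \<bullet> w + s^2 * (u \<bullet> u)" using assms(2) by (simp add: inner_simps inner_commute power2_eq_square)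
  also have "\<dots> = norm w ^ 2 + s^2" using assms(1) by (simp add: power2_norm_eq_inner norm_eq_1)
  finally show ?thesis .
qed

lemma coreSL:
  fixes u :: "'a::euclidean_space" and f :: "'a \<Rightarrow> ennreal"
  assumes u: "norm u = 1" and f[measurable]: "f \<in> borel_measurable borel"
  shows "(\<integral>\<^sup>+z. f z \<partial>lborel) = (\<integral>\<^sup>+s. (\<integral>\<^sup>+z. indicator (slab u) z * f (Pj u z + s *\<^sub>R u) \<partial>lborel) \<partial>(lborel::real measure))"
proof -
  have inner: "(\<integral>\<^sup>+s. f (Pj u z + s *\<^sub>R u) \<partial>lborel) = (\<integral>\<^sup>+s. f (z - s *\<^sub>R u) \<partial>lborel)" for z
  proof -
    have "(\<integral>\<^sup>+s. f (Pj u z + s *\<^sub>R u) \<partial>lborel) = (\<integral>\<^sup>+s. f (Pj u z + (z \<bullet> u + (-1) * s) *\<^sub>R u) \<partial>lborel)"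
      using nn_integral_real_affine[where c="-1" and t="z \<bullet> u" and f="\<lambda>s. f (Pj u z + s *\<^sub>R u)"] by simp
    also have "(\<lambda>s. Pj u z + (z \<bullet> u + (-1) * s) *\<^sub>R u) = (\<lambda>s. z - s *\<^sub>R u)"
      by (auto simp: Pj_def algebra_simps)
    finally show ?thesis by simp
  qed
  have "(\<integral>\<^sup>+s. (\<integral>\<^sup>+z. indicator (slab u) z * f (Pj u z + s *\<^sub>R u) \<partial>lborel) \<partial>(lborel::real measure))
     = (\<integral>\<^sup>+z. (\<integral>\<^sup>+s. indicator (slab u) z * f (Pj u z + s *\<^sub>R u) \<partial>(lborel::real measure)) \<partial>lborel)"
    by (rule lborel_pair.Fubini') measurable
  also have "\<dots> = (\<integral>\<^sup>+z. indicator (slab u) z * (\<integral>\<^sup>+s. f (z - s *\<^sub>R u) \<partial>lborel) \<partial>lborel)"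
    by (intro nn_integral_cong) (simp add: nn_integral_cmult inner)
  also have "\<dots> = (\<integral>\<^sup>+z. f z \<partial>lborel)" by (rule coreT[OF u f])
  finally show ?thesis ..
qed

definition cyl :: "'a::euclidean_space \<Rightarrow> 'a \<Rightarrow> real \<Rightarrow> 'a set" where
  "cyl u y R = {z. norm (Pj u z - y) \<le> R \<and> 0 \<le> z \<bullet> u \<and> z \<bullet> u \<le> 1}"

lemma cyl_borel[measurable]: "cyl u y R \<in> sets borel"
  unfolding cyl_def by (intro borel_closed closed_Collect_conj closed_Collect_le continuous_intros)

lemma cyl_translate:
  assumes u: "norm u = 1" and y: "y \<bullet> u = 0"
  shows "emeasure lborel (cyl u y R) = emeasure lborel (cyl u 0 R)"
proof -
  have "emeasure lborel (cyl u y R) = emeasure (distr lborel borel ((+) y)) (cyl u y R)"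
    by (simp add: lborel_distr_plus)
  also have "\<dots> = emeasure lborel ((+) y -` cyl u y R \<inter> space lborel)"
    by (rule emeasure_distr) auto
  also have "(+) y -` cyl u y R \<inter> space lborel = cyl u 0 R"
    using y by (auto simp: cyl_def Pj_perp[OF u y] inner_simps)
  finally show ?thesis .
qed


lemma emeasure_lborel_scale:
  fixes A :: "'a::euclidean_space set"
  assumes c: "c > 0" and A[measurable]: "A \<in> sets borel"
  shows "emeasure lborel A = ennreal (c ^ DIM('a)) * emeasure lborel ((\<lambda>x. c *\<^sub>R x) -` A)"
proof -
  have "emeasure lborel A = emeasure (density (distr lborel borel (\<lambda>x. 0 + c *\<^sub>R x)) (\<lambda>_. \<bar>c\<bar>^DIM('a))) A"
  proof -
    have eq: "(lborel::'a measure) = density (distr lborel borel (\<lambda>x. 0 + c *\<^sub>R x)) (\<lambda>_. \<bar>c\<bar>^DIM('a))"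
      using lborel_affine[of c "0::'a"] c by simp
    show ?thesis by (rule arg_cong[where f="\<lambda>M. emeasure M A"]) (rule eq)
  qed
  also have "\<dots> = (\<integral>\<^sup>+ x. ennreal (\<bar>c\<bar>^DIM('a)) * indicator A x \<partial>distr lborel borel (\<lambda>x. 0 + c *\<^sub>R x))"
    by (subst emeasure_density) auto
  also have "\<dots> = ennreal (\<bar>c\<bar>^DIM('a)) * emeasure (distr lborel borel (\<lambda>x. 0 + c *\<^sub>R x)) A"
    by (subst nn_integral_cmult_indicator) auto
  also have "\<dots> = ennreal (c^DIM('a)) * emeasure lborel ((\<lambda>x. c *\<^sub>R x) -` A)"
    using c by (subst emeasure_distr) auto
  finally show ?thesis .
qed

lemma cyl_scale:
  fixes u :: "'a::euclidean_space"
  assumes u: "norm u = 1" and r: "r > 0"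
  shows "ennreal r * emeasure lborel (cyl u 0 r) = ennreal (r ^ DIM('a)) * emeasure lborel (cyl u 0 1)"
proof -
  define C where "C = {z::'a. norm (Pj u z) \<le> r \<and> 0 \<le> z \<bullet> u \<and> z \<bullet> u \<le> r}"
  have C[measurable]: "C \<in> sets borel"
    unfolding C_def by (intro borel_closed closed_Collect_conj closed_Collect_le continuous_intros)
  have "emeasure lborel C = (\<integral>\<^sup>+z. indicator C z \<partial>lborel)" by simp
  also have "\<dots> = (\<integral>\<^sup>+s. (\<integral>\<^sup>+z. indicator (slab u) z * indicator C (Pj u z + s *\<^sub>R u) \<partial>lborel) \<partial>(lborel::real measure))"
    by (rule coreSL[OF u]) simp
  also have "\<dots> = (\<integral>\<^sup>+s. emeasure lborel (cyl u 0 r) * indicator {0..r} s \<partial>(lborel::real measure))"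
  proof -
    have "indicator (slab u) z * indicator C (Pj u z + s *\<^sub>R u) = (indicator (cyl u 0 r) z * indicator {0..r} s :: ennreal)" for z s
      using Pj_add_line[OF u, of z s] Pj_inner[OF u, of z] u
      by (auto simp: indicator_def slab_def cyl_def C_def inner_simps norm_eq_1)
    then show ?thesis by (simp add: nn_integral_multc)
  qed
  also have "\<dots> = emeasure lborel (cyl u 0 r) * ennreal r"
    using r by (simp add: nn_integral_cmult_indicator)
  finally have 1: "emeasure lborel C = emeasure lborel (cyl u 0 r) * ennreal r" .
  have "emeasure lborel C = ennreal (r ^ DIM('a)) * emeasure lborel ((\<lambda>x. r *\<^sub>R x) -` C)"
    by (rule emeasure_lborel_scale[OF r C])
  also have "(\<lambda>x. r *\<^sub>R x) -` C = cyl u 0 1"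
    using r by (auto simp: C_def cyl_def Pj_def algebra_simps inner_simps zero_le_mult_iff
        simp flip: scaleR_diff_right scaleR_scaleR)
  finally show ?thesis using 1 by (simp add: mult.commute)
qed


lemma unit_ball_vol_rec: "unit_ball_vol (real n) * Beta (1/2) (real n / 2 + 1) = unit_ball_vol (real (Suc n))"
  by (auto simp: unit_ball_vol_def Beta_def Gamma_eq_zero_iff field_simps
          Gamma_one_half_real powr_half_sqrt [symmetric] powr_add [symmetric])

lemma G3:
  assumes r: "r > 0"
  shows "(\<integral>\<^sup>+s. indicator {-r..r} s * ennreal (unit_ball_vol (real n) * sqrt (r^2 - s^2) ^ n) \<partial>lborel)
      = ennreal (unit_ball_vol (real (Suc n)) * r ^ Suc n)"
proof -
  have "(\<integral>\<^sup>+s. indicator {-r..r} s * ennreal (unit_ball_vol (real n) * sqrt (r^2 - s^2) ^ n) \<partial>lborel)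
     = ennreal (unit_ball_vol (real n)) * (\<integral>\<^sup>+ (y::real). indicator {-r..r} y * (sqrt (r ^ 2 - y ^ 2)) ^ n \<partial>lborel)"
    by (subst nn_integral_cmult [symmetric])
       (auto simp: mult_ac ennreal_mult' [symmetric] indicator_def intro!: nn_integral_cong)
  also have "(\<integral>\<^sup>+ (y::real). indicator {-r..r} y * (sqrt (r ^ 2 - y ^ 2)) ^ n \<partial>lborel) =
               (\<integral>\<^sup>+ (y::real). r ^ n * indicator {-1..1} y * (sqrt (1 - y ^ 2)) ^ n
               \<partial>(distr lborel borel ((*) (1/r))))" using \<open>r > 0\<close>
    by (subst nn_integral_distr)
       (auto simp: indicator_def field_simps real_sqrt_divide intro!: nn_integral_cong)
  also have "\<dots> = (\<integral>\<^sup>+ x. ennreal (r ^ Suc n) *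
               (indicator {- 1..1} x * sqrt (1 - x\<^sup>2) ^ n) \<partial>lborel)" using \<open>r > 0\<close>
    by (subst lborel_distr_mult) (auto simp: nn_integral_density ennreal_mult' [symmetric] mult_ac)
  also have "\<dots> = ennreal (r ^ Suc n) * (\<integral>\<^sup>+ x. indicator {- 1..1} x *
                    sqrt (1 - x\<^sup>2) ^ n \<partial>lborel)"
    by (subst nn_integral_cmult) auto
  also note emeasure_cball_aux_integral
  also have "ennreal (unit_ball_vol (real n)) * (ennreal (r ^ Suc n) *
                 ennreal (Beta (1/2) (n / 2 + 1))) =
               ennreal (unit_ball_vol n * Beta (1/2) (n / 2 + 1) * r ^ Suc n)"
    using \<open>r > 0\<close> by (simp add: ennreal_mult' [symmetric] mult_ac)
  also note unit_ball_vol_rec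
  finally show ?thesis .
qed

lemma cyl_vol1:
  fixes u :: "'a::euclidean_space"
  assumes u: "norm u = 1"
  shows "emeasure lborel (cyl u 0 1) = ennreal (unit_ball_vol (real (DIM('a) - 1)))"
proof -
  define n where "n = DIM('a) - 1"
  have dn: "DIM('a) = Suc n" unfolding n_def using DIM_positive[where 'a='a] by linarith
  define g where "g = emeasure lborel (cyl u 0 1)"
  have gr: "emeasure lborel (cyl u 0 r) = ennreal (r ^ n) * g" if "r > 0" for r
  proof -
    have "ennreal r * emeasure lborel (cyl u 0 r) = ennreal r * (ennreal (r ^ n) * g)"
      using cyl_scale[OF u that] that unfolding g_def dn
      by (simp add: ennreal_mult' mult.assoc)
    then show ?thesis using that by (simp add: ennreal_mult_cancel_left)
  qed
  have "ennreal (unit_ball_vol (real (Suc n)) * 1 ^ Suc n) = emeasure lborel (cball (0::'a) 1)"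
    by (subst emeasure_cball) (auto simp: dn)
  also have "\<dots> = (\<integral>\<^sup>+z. indicator (cball (0::'a) 1) z \<partial>lborel)" by simp
  also have "\<dots> = (\<integral>\<^sup>+s. (\<integral>\<^sup>+z. indicator (slab u) z * indicator (cball (0::'a) 1) (Pj u z + s *\<^sub>R u) \<partial>lborel) \<partial>(lborel::real measure))"
    by (rule coreSL[OF u]) (intro borel_measurable_indicator borel_closed closed_cball)
  also have "\<dots> = (\<integral>\<^sup>+s. indicator {-1..1} s * emeasure lborel (cyl u 0 (sqrt (1 - s^2))) \<partial>(lborel::real measure))"
  proof -
    have "indicator (slab u) z * indicator (cball (0::'a) 1) (Pj u z + s *\<^sub>R u) = (indicator {-1..1} s * indicator (cyl u 0 (sqrt (1 - s^2))) z :: ennreal)" for z s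
    proof -
      have e: "norm (Pj u z + s *\<^sub>R u) ^ 2 = norm (Pj u z) ^ 2 + s ^ 2"
        by (rule norm_Pj_line[OF u Pj_inner[OF u]])
      have "norm (Pj u z + s *\<^sub>R u) \<le> 1 \<longleftrightarrow> s \<in> {-1..1} \<and> norm (Pj u z) \<le> sqrt (1 - s^2)"
      proof
        assume "norm (Pj u z + s *\<^sub>R u) \<le> 1"
        then have "norm (Pj u z) ^ 2 + s ^ 2 \<le> 1" using e by (metis norm_ge_zero power_le_one)
        moreover have "s^2 \<le> 1" using \<open>norm (Pj u z) ^ 2 + s ^ 2 \<le> 1\<close>
          by (smt (verit) zero_le_power2)
        then have "\<bar>s\<bar> \<le> 1" by (simp add: abs_square_le_1)
        ultimately show "s \<in> {-1..1} \<and> norm (Pj u z) \<le> sqrt (1 - s^2)"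
          by (auto simp: real_le_rsqrt abs_le_iff)
      next
        assume "s \<in> {-1..1} \<and> norm (Pj u z) \<le> sqrt (1 - s^2)"
        then have "norm (Pj u z) ^ 2 \<le> 1 - s^2"
          by (metis abs_square_le_1 atLeastAtMost_iff abs_le_iff diff_ge_0_iff_ge norm_ge_zero power_mono real_sqrt_pow2 minus_le_iff)
        then have "norm (Pj u z + s *\<^sub>R u) ^ 2 \<le> 1" using e by simp
        then show "norm (Pj u z + s *\<^sub>R u) \<le> 1" by (simp add: power_le_one_iff)
      qed
      then show ?thesis by (auto simp: indicator_def slab_def cyl_def)
    qed
    then show ?thesis by (simp add: nn_integral_cmult)
  qed
  also have "\<dots> = (\<integral>\<^sup>+s. g * (indicator {-1..1} s * ennreal (sqrt (1 - s^2) ^ n)) \<partial>(lborel::real measure))"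
  proof (intro nn_integral_cong_AE)
    have "AE s in lborel. s \<notin> {-1, 1::real}"
      by (intro AE_not_in countable_imp_null_set_lborel) auto
    then show "AE s in lborel. indicator {-1..1} s * emeasure lborel (cyl u 0 (sqrt (1 - s^2))) = g * (indicator {-1..1} s * ennreal (sqrt (1 - s^2) ^ n))"
    proof eventually_elim
      case (elim s)
      show ?case
      proof (cases "s \<in> {-1<..<1}")
        case True
        then have "s^2 < 1" by (simp add: abs_square_less_1 abs_less_iff)
        then have "sqrt (1 - s^2) > 0" by simp
        then show ?thesis using True by (simp add: gr mult.commute)
      qed (use elim in \<open>auto simp: indicator_def\<close>)
    qed
  qed
  also have "\<dots> = g * ennreal (Beta (1 / 2) (real n / 2 + 1))"
  proof -
    have "(\<integral>\<^sup>+s. indicator {-1..1} s * ennreal (sqrt (1 - s^2) ^ n) \<partial>(lborel::real measure))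
       = (\<integral>\<^sup>+s. ennreal (indicator {-1..1} s * sqrt (1 - s^2) ^ n) \<partial>lborel)"
      by (intro nn_integral_cong) (auto simp: indicator_def)
    then show ?thesis
      by (subst nn_integral_cmult) (auto simp: emeasure_cball_aux_integral)
  qed
  finally have 1: "ennreal (unit_ball_vol (real (Suc n))) = g * ennreal (Beta (1 / 2) (real n / 2 + 1))" by simp
  have bpos: "Beta (1 / 2) (real n / 2 + 1) > 0" unfolding Beta_def by (intro divide_pos_pos mult_pos_pos Gamma_real_pos) auto
  have "g * ennreal (Beta (1 / 2) (real n / 2 + 1)) = ennreal (unit_ball_vol (real n)) * ennreal (Beta (1 / 2) (real n / 2 + 1))"
    unfolding 1[symmetric] unit_ball_vol_rec[symmetric] using bpos by (simp add: ennreal_mult')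
  then have "ennreal (Beta (1 / 2) (real n / 2 + 1)) * g = ennreal (Beta (1 / 2) (real n / 2 + 1)) * ennreal (unit_ball_vol (real n))"
    by (simp add: mult.commute)
  then have "g = ennreal (unit_ball_vol (real n))"
    by (subst (asm) ennreal_mult_cancel_left) (use bpos in auto)
  then show ?thesis unfolding g_def n_def .
qed

lemma cyl_vol:
  fixes u :: "'a::euclidean_space"
  assumes u: "norm u = 1" and y: "y \<bullet> u = 0" and r: "r > 0"
  shows "emeasure lborel (cyl u y r) = ball_volume (DIM('a) - 1) r"
proof -
  define n where "n = DIM('a) - 1"
  have dn: "DIM('a) = Suc n" unfolding n_def using DIM_positive[where 'a='a] by linarith
  have "ennreal r * emeasure lborel (cyl u 0 r) = ennreal r * (ennreal (r ^ n) * ennreal (unit_ball_vol (real n)))"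
    using cyl_scale[OF u r] r cyl_vol1[OF u] unfolding dn n_def[symmetric]
    by (simp add: ennreal_mult' mult.assoc)
  then have "emeasure lborel (cyl u 0 r) = ennreal (r ^ n) * ennreal (unit_ball_vol (real n))"
    using r by (simp add: ennreal_mult_cancel_left)
  moreover have "ball_volume (DIM('a) - 1) r = ennreal (unit_ball_vol (real n) * r^n)"
    by (simp only: ball_volume_def n_def)
  ultimately show ?thesis using cyl_translate[OF u y, of r] r
    by (simp add: ennreal_mult' mult.commute)
qed

lemma ediv_le_iff: "b \<noteq> 0 \<Longrightarrow> b \<noteq> top \<Longrightarrow> a / b \<le> c \<longleftrightarrow> a \<le> c * (b::ennreal)"
proof
  assume b: "b \<noteq> 0" "b \<noteq> top" and h: "a / b \<le> c"
  have "a = (a / b) * b" using b by (simp add: ennreal_divide_times top.not_eq_extremum)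
  also have "\<dots> \<le> c * b" using h by (rule mult_right_mono) simp
  finally show "a \<le> c * b" .
next
  assume b: "b \<noteq> 0" "b \<noteq> top" and h: "a \<le> c * b"
  have "a / b \<le> (c * b) / b" using h by (rule divide_right_mono_ennreal)
  also have "\<dots> = c" using b by (rule ennreal_mult_divide_eq)
  finally show "a / b \<le> c" .
qed

lemma le_ediv_iff: "b \<noteq> 0 \<Longrightarrow> b \<noteq> top \<Longrightarrow> c \<le> a / b \<longleftrightarrow> c * b \<le> (a::ennreal)"
proof
  assume b: "b \<noteq> 0" "b \<noteq> top" and h: "c \<le> a / b"
  have "c * b \<le> (a / b) * b" using h by (rule mult_right_mono) simp
  also have "\<dots> = a" using b by (simp add: ennreal_divide_times top.not_eq_extremum)
  finally show "c * b \<le> a" .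
next
  assume b: "b \<noteq> 0" "b \<noteq> top" and h: "c * b \<le> a"
  have "c = (c * b) / b" using b by (simp add: ennreal_mult_divide_eq)
  also have "\<dots> \<le> a / b" using h by (rule divide_right_mono_ennreal)
  finally show "c \<le> a / b" .
qed

lemma norm_line_le:
  fixes u :: "'a::euclidean_space"
  assumes u: "norm u = 1" and w: "w \<bullet> u = 0"
  shows "norm (w + s *\<^sub>R u) \<le> a \<longleftrightarrow> s \<in> {-a..a} \<and> norm w \<le> sqrt (a^2 - s^2)"
proof -
  have e: "norm (w + s *\<^sub>R u) ^ 2 = norm w ^ 2 + s ^ 2" by (rule norm_Pj_line[OF u w])
  show ?thesis
  proof
    assume h: "norm (w + s *\<^sub>R u) \<le> a"
    then have a: "a \<ge> 0" by (meson norm_ge_zero order_trans)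
    have "norm w ^ 2 + s ^ 2 \<le> a^2" using e h by (metis norm_ge_zero power_mono)
    moreover have "s^2 \<le> a^2" using calculation by (metis add_le_same_cancel2 order_trans zero_le_power2 le_add_same_cancel2)
    then have "\<bar>s\<bar> \<le> a" using a by (simp add: power2_le_iff_abs_le)
    ultimately show "s \<in> {-a..a} \<and> norm w \<le> sqrt (a^2 - s^2)"
      by (auto simp: real_le_rsqrt abs_le_iff)
  next
    assume h: "s \<in> {-a..a} \<and> norm w \<le> sqrt (a^2 - s^2)"
    then have a: "a \<ge> 0" by auto
    from h have "\<bar>s\<bar> \<le> a" by auto
    then have "s^2 \<le> a^2" using a by (simp add: power2_le_iff_abs_le)
    then have "norm w ^ 2 \<le> a^2 - s^2" using h
      by (metis diff_ge_0_iff_ge norm_ge_zero power_mono real_sqrt_pow2)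
    then have "norm (w + s *\<^sub>R u) ^ 2 \<le> a^2" using e by simp
    then show "norm (w + s *\<^sub>R u) \<le> a" using a by (simp add: power2_le_iff_abs_le)
  qed
qed

lemma norm_Pj_le: "norm u = 1 \<Longrightarrow> norm (Pj u v) \<le> norm v"
proof -
  assume u: "norm u = 1"
  have "v = Pj u v + (v \<bullet> u) *\<^sub>R u" by (simp add: Pj_def)
  then have "norm v ^ 2 = norm (Pj u v) ^ 2 + (v \<bullet> u)^2"
    by (metis norm_Pj_line[OF u Pj_inner[OF u]])
  then have "norm (Pj u v) ^ 2 \<le> norm v ^ 2" by simp
  then show ?thesis using norm_ge_zero power2_le_imp_le by blast
qed

lemma Pj_linear: "Pj u (v - w) = Pj u v - Pj u w" "Pj u (v + w) = Pj u v + Pj u w"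
  by (auto simp: Pj_def inner_simps algebra_simps)

lemma Pj_id: "norm u = 1 \<Longrightarrow> l \<bullet> u = 0 \<Longrightarrow> Pj u l = l"
  by (simp add: Pj_def)

lemma Pj_minus_line: "norm u = 1 \<Longrightarrow> Pj u (z - s *\<^sub>R u) = Pj u z"
  by (simp add: Pj_def inner_simps norm_eq_1 algebra_simps)

definition Kf :: "'a::euclidean_space \<Rightarrow> real \<Rightarrow> 'a \<Rightarrow> 'a \<Rightarrow> ennreal" where
  "Kf u a x l = (\<integral>\<^sup>+s. indicator (cball x a) (l + s *\<^sub>R u) \<partial>lborel)"

definition Mf :: "'a::euclidean_space \<Rightarrow> 'a set \<Rightarrow> real \<Rightarrow> 'a \<Rightarrow> ennreal" where
  "Mf u L a x = (\<integral>\<^sup>+l. Kf u a x l \<partial>count_space L)"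

definition Nf :: "'a::euclidean_space set \<Rightarrow> 'a \<Rightarrow> real \<Rightarrow> ennreal" where
  "Nf L y r = emeasure (count_space UNIV) (L \<inter> cball y r)"

lemma Kf_formula:
  fixes u :: "'a::euclidean_space"
  assumes u: "norm u = 1" and l: "l \<bullet> u = 0"
  shows "Kf u a x l = (\<integral>\<^sup>+s. indicator {-a..a} s * indicator (cball (Pj u x) (sqrt (a^2 - s^2))) l \<partial>lborel)"
proof -
  have meas: "(\<lambda>s. indicator (cball x a) (l + s *\<^sub>R u) :: ennreal) \<in> borel_measurable borel"
  proof -
    have "(\<lambda>s. indicator (cball x a) (l + s *\<^sub>R u) :: ennreal) = indicator {s. dist x (l + s *\<^sub>R u) \<le> a}"
      by (auto simp: fun_eq_iff indicator_def)
    also have "\<dots> \<in> borel_measurable borel"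
      by (intro borel_measurable_indicator borel_closed closed_Collect_le continuous_intros)
    finally show ?thesis .
  qed
  have "Kf u a x l = (\<integral>\<^sup>+s. indicator (cball x a) (l + (x \<bullet> u + 1 * s) *\<^sub>R u) \<partial>lborel)"
    unfolding Kf_def using meas
    using nn_integral_real_affine[where c="1" and t="x \<bullet> u" and f="\<lambda>s. indicator (cball x a) (l + s *\<^sub>R u) :: ennreal"]
    by simp
  also have "\<dots> = (\<integral>\<^sup>+s. indicator {-a..a} s * indicator (cball (Pj u x) (sqrt (a^2 - s^2))) l \<partial>lborel)"
  proof (intro nn_integral_cong)
    fix s :: real
    have w: "(l - Pj u x) \<bullet> u = 0" using l Pj_inner[OF u, of x] by (simp add: inner_simps)
    have "dist x (l + (x \<bullet> u + 1 * s) *\<^sub>R u) = norm ((l - Pj u x) + s *\<^sub>R u)"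
      by (simp add: dist_norm Pj_def algebra_simps norm_minus_commute)
    then have "x \<in> cball x a \<or> True" by simp
    have "(l + (x \<bullet> u + 1 * s) *\<^sub>R u \<in> cball x a) \<longleftrightarrow> s \<in> {-a..a} \<and> l \<in> cball (Pj u x) (sqrt (a^2 - s^2))"
      using norm_line_le[OF u w, of s a] \<open>dist x _ = _\<close>
      by (simp add: dist_norm norm_minus_commute)
    then show "indicator (cball x a) (l + (x \<bullet> u + 1 * s) *\<^sub>R u) = (indicator {-a..a} s * indicator (cball (Pj u x) (sqrt (a^2 - s^2))) l :: ennreal)"
      by (auto simp: indicator_def)
  qed
  finally show ?thesis .
qed

lemma count_space_indicator_Nf:
  assumes "countable L"
  shows "(\<integral>\<^sup>+l. indicator C l \<partial>count_space L) = emeasure (count_space UNIV) (L \<inter> C)"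
proof -
  have "(\<integral>\<^sup>+l. indicator C l \<partial>count_space L) = (\<integral>\<^sup>+l. indicator (C \<inter> L) l \<partial>count_space L)"
    by (intro nn_integral_cong) (auto simp: indicator_def)
  also have "\<dots> = emeasure (count_space L) (C \<inter> L)"
    by (rule nn_integral_indicator) auto
  also have "\<dots> = emeasure (count_space UNIV) (L \<inter> C)"
    by (simp add: emeasure_count_space Int_commute)
  finally show ?thesis .
qed

lemma Mf_formula:
  fixes u :: "'a::euclidean_space"
  assumes u: "norm u = 1" and L: "countable L" "\<And>l. l \<in> L \<Longrightarrow> l \<bullet> u = 0"
  shows "Mf u L a x = (\<integral>\<^sup>+s. indicator {-a..a} s * Nf L (Pj u x) (sqrt (a^2 - s^2)) \<partial>lborel)"
proof -
  have "Mf u L a x = (\<integral>\<^sup>+l. (\<integral>\<^sup>+s. indicator {-a..a} s * indicator (cball (Pj u x) (sqrt (a^2 - s^2))) l \<partial>lborel) \<partial>count_space L)"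
    unfolding Mf_def by (intro nn_integral_cong) (simp add: Kf_formula[OF u L(2)])
  also have "\<dots> = (\<integral>\<^sup>+s. (\<integral>\<^sup>+l. indicator {-a..a} s * indicator (cball (Pj u x) (sqrt (a^2 - s^2))) l \<partial>count_space L) \<partial>lborel)"
  proof (rule nn_integral_count_space_nn_integral[symmetric, OF L(1)])
    fix l
    have "(\<lambda>s. indicator {-a..a} s * indicator (cball (Pj u x) (sqrt (a^2 - s^2))) l :: ennreal)
        = indicator {s. -a \<le> s \<and> s \<le> a \<and> dist (Pj u x) l \<le> sqrt (a^2 - s^2)}"
      by (auto simp: indicator_def fun_eq_iff)
    also have "\<dots> \<in> borel_measurable borel"
      by (intro borel_measurable_indicator borel_closed closed_Collect_conj closed_Collect_le continuous_intros)
    finally show "(\<lambda>s. indicator {-a..a} s * indicator (cball (Pj u x) (sqrt (a^2 - s^2))) l :: ennreal) \<in> borel_measurable lborel"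
      by simp
  qed
  also have "\<dots> = (\<integral>\<^sup>+s. indicator {-a..a} s * Nf L (Pj u x) (sqrt (a^2 - s^2)) \<partial>lborel)"
    by (intro nn_integral_cong) (simp add: nn_integral_cmult count_space_indicator_Nf[OF L(1)] Nf_def)
  finally show ?thesis .
qed

lemma Kf_alt: "Kf u r z l = (\<integral>\<^sup>+s. indicator (cball l r) (z - s *\<^sub>R u) \<partial>lborel)"
  unfolding Kf_def
  by (intro nn_integral_cong) (auto simp: indicator_def dist_norm algebra_simps norm_minus_commute)

lemma Kf_zero:
  fixes u :: "'a::euclidean_space"
  assumes u: "norm u = 1" and l: "l \<bullet> u = 0" and d: "r < norm (Pj u z - l)"
  shows "Kf u r z l = 0"
proof -
  have "indicator (cball l r) (z - s *\<^sub>R u) = (0::ennreal)" for s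
  proof -
    have uu: "u \<bullet> u = 1" using u by (simp add: norm_eq_1)
    have "Pj u (z - s *\<^sub>R u - l) = Pj u z - l"
      using l uu by (simp add: Pj_def inner_simps algebra_simps)
    then have "norm (Pj u z - l) = norm (Pj u (z - s *\<^sub>R u - l))" by simp
    also have "\<dots> \<le> norm (z - s *\<^sub>R u - l)" by (rule norm_Pj_le[OF u])
    finally have "r < dist l (z - s *\<^sub>R u)" using d by (simp add: dist_norm norm_minus_commute)
    then show ?thesis by (simp add: indicator_def)
  qed
  then show ?thesis by (simp add: Kf_alt)
qed

lemma Kf_meas[measurable]: "(\<lambda>z. Kf u r z l) \<in> borel_measurable (lborel::'a::euclidean_space measure)"
proof -
  have [measurable]: "indicator (cball l r) \<in> (borel_measurable borel :: ('a \<Rightarrow> ennreal) set)"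
    by (intro borel_measurable_indicator borel_closed closed_cball)
  show ?thesis unfolding Kf_alt
    by (rule lborel.borel_measurable_nn_integral) measurable
qed

lemma I_slab:
  fixes u :: "'a::euclidean_space"
  assumes u: "norm u = 1"
  shows "(\<integral>\<^sup>+z. indicator (slab u) z * Kf u r z l \<partial>lborel) = emeasure lborel (cball (0::'a) r)"
proof -
  have "(\<integral>\<^sup>+z. indicator (slab u) z * Kf u r z l \<partial>lborel) = (\<integral>\<^sup>+z. indicator (cball l r) z \<partial>lborel)"
    unfolding Kf_alt by (rule coreT[OF u]) (intro borel_measurable_indicator borel_closed closed_cball)
  also have "\<dots> = emeasure lborel (cball (0::'a) r)"
    by (cases "r \<ge> 0") (simp_all add: emeasure_cball)
  finally show ?thesis .
qed

lemma avg_swap: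
  fixes u :: "'a::euclidean_space"
  assumes L: "countable L"
  shows "(\<integral>\<^sup>+z. indicator (cyl u y R) z * Mf u L r z \<partial>lborel) =
    (\<integral>\<^sup>+l. (\<integral>\<^sup>+z. indicator (cyl u y R) z * Kf u r z l \<partial>lborel) \<partial>count_space L)"
proof -
  have "(\<integral>\<^sup>+z. indicator (cyl u y R) z * Mf u L r z \<partial>lborel) =
     (\<integral>\<^sup>+z. (\<integral>\<^sup>+l. indicator (cyl u y R) z * Kf u r z l \<partial>count_space L) \<partial>lborel)"
    unfolding Mf_def by (intro nn_integral_cong) (simp add: nn_integral_cmult)
  also have "\<dots> = (\<integral>\<^sup>+l. (\<integral>\<^sup>+z. indicator (cyl u y R) z * Kf u r z l \<partial>lborel) \<partial>count_space L)"
    by (rule nn_integral_count_space_nn_integral[OF L]) measurable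
  finally show ?thesis .
qed

lemma avg_upper:
  fixes u :: "'a::euclidean_space"
  assumes u: "norm u = 1" and L: "countable L" "\<And>l. l \<in> L \<Longrightarrow> l \<bullet> u = 0"
  shows "(\<integral>\<^sup>+z. indicator (cyl u y R) z * Mf u L r z \<partial>lborel) \<le> emeasure lborel (cball (0::'a) r) * Nf L y (R + r)"
proof -
  have J: "(\<integral>\<^sup>+z. indicator (cyl u y R) z * Kf u r z l \<partial>lborel) \<le> emeasure lborel (cball (0::'a) r) * indicator (cball y (R + r)) l"
    if l: "l \<in> L" for l
  proof -
    have lu: "l \<bullet> u = 0" using L(2)[OF l] .
    have "(\<integral>\<^sup>+z. indicator (cyl u y R) z * Kf u r z l \<partial>lborel) \<le> (\<integral>\<^sup>+z. indicator (cball y (R + r)) l * (indicator (slab u) z * Kf u r z l) \<partial>lborel)"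
    proof (intro nn_integral_mono)
      fix z
      show "indicator (cyl u y R) z * Kf u r z l \<le> indicator (cball y (R + r)) l * (indicator (slab u) z * Kf u r z l)"
      proof (cases "z \<in> cyl u y R")
        case True
        show ?thesis
        proof (cases "l \<in> cball y (R + r)")
          case True
          then show ?thesis using \<open>z \<in> cyl u y R\<close> by (simp add: indicator_def cyl_def slab_def)
        next
          case False
          have "norm (Pj u z - y) \<le> R" using \<open>z \<in> cyl u y R\<close> by (simp add: cyl_def)
          moreover have "R + r < dist y l" using False by simp
          moreover have "dist y l \<le> dist y (Pj u z) + dist (Pj u z) l" by (rule dist_triangle)
          ultimately have "r < norm (Pj u z - l)"
            by (simp add: dist_norm norm_minus_commute)
          then show ?thesis by (simp add: Kf_zero[OF u lu])
        qed
      qed (simp add: indicator_def)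
    qed
    also have "\<dots> = indicator (cball y (R + r)) l * emeasure lborel (cball (0::'a) r)"
      by (simp add: nn_integral_cmult I_slab[OF u])
    finally show ?thesis by (simp add: mult.commute)
  qed
  have "(\<integral>\<^sup>+z. indicator (cyl u y R) z * Mf u L r z \<partial>lborel) \<le> (\<integral>\<^sup>+l. emeasure lborel (cball (0::'a) r) * indicator (cball y (R + r)) l \<partial>count_space L)"
    unfolding avg_swap[OF L(1)] by (intro nn_integral_mono J) simp
  also have "\<dots> = emeasure lborel (cball (0::'a) r) * Nf L y (R + r)"
    by (simp add: nn_integral_cmult count_space_indicator_Nf[OF L(1)] Nf_def)
  finally show ?thesis .
qed

lemma avg_lower:
  fixes u :: "'a::euclidean_space"
  assumes u: "norm u = 1" and L: "countable L" "\<And>l. l \<in> L \<Longrightarrow> l \<bullet> u = 0"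
  shows "emeasure lborel (cball (0::'a) r) * Nf L y (R - r) \<le> (\<integral>\<^sup>+z. indicator (cyl u y R) z * Mf u L r z \<partial>lborel)"
proof -
  have J: "emeasure lborel (cball (0::'a) r) * indicator (cball y (R - r)) l \<le> (\<integral>\<^sup>+z. indicator (cyl u y R) z * Kf u r z l \<partial>lborel)"
    if l: "l \<in> L" for l
  proof -
    have lu: "l \<bullet> u = 0" using L(2)[OF l] .
    have "indicator (cball y (R - r)) l * emeasure lborel (cball (0::'a) r) = (\<integral>\<^sup>+z. indicator (cball y (R - r)) l * (indicator (slab u) z * Kf u r z l) \<partial>lborel)"
      by (simp add: nn_integral_cmult I_slab[OF u])
    also have "\<dots> \<le> (\<integral>\<^sup>+z. indicator (cyl u y R) z * Kf u r z l \<partial>lborel)"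
    proof (intro nn_integral_mono)
      fix z
      show "indicator (cball y (R - r)) l * (indicator (slab u) z * Kf u r z l) \<le> indicator (cyl u y R) z * Kf u r z l"
      proof (cases "l \<in> cball y (R - r) \<and> z \<in> slab u")
        case True
        show ?thesis
        proof (cases "z \<in> cyl u y R")
          case False
          have "dist y l \<le> R - r" using True by simp
          moreover have "\<not> norm (Pj u z - y) \<le> R" using False True by (simp add: cyl_def slab_def)
          moreover have "dist (Pj u z) y \<le> dist (Pj u z) l + dist l y" by (rule dist_triangle)
          ultimately have "r < norm (Pj u z - l)"
            by (simp add: dist_norm norm_minus_commute)
          then show ?thesis by (simp add: Kf_zero[OF u lu])
        qed (use True in \<open>simp add: indicator_def\<close>)
      qed (auto simp: indicator_def)
    qed
    finally show ?thesis by (simp add: mult.commute)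
  qed
  have "emeasure lborel (cball (0::'a) r) * Nf L y (R - r) = (\<integral>\<^sup>+l. emeasure lborel (cball (0::'a) r) * indicator (cball y (R - r)) l \<partial>count_space L)"
    by (simp add: nn_integral_cmult count_space_indicator_Nf[OF L(1)] Nf_def)
  also have "\<dots> \<le> (\<integral>\<^sup>+z. indicator (cyl u y R) z * Mf u L r z \<partial>lborel)"
    unfolding avg_swap[OF L(1)] by (intro nn_integral_mono J) simp
  finally show ?thesis .
qed

lemma B_fin:
  assumes "a > 0"
  shows "emeasure lborel (cball (0::'a::euclidean_space) a) \<noteq> 0" "emeasure lborel (cball (0::'a) a) \<noteq> top"
proof -
  have pos: "unit_ball_vol (real DIM('a)) \<noteq> 0" using unit_ball_vol_pos[of "real DIM('a)"] by linarith
  then show "emeasure lborel (cball (0::'a::euclidean_space) a) \<noteq> 0" "emeasure lborel (cball (0::'a) a) \<noteq> top"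
    using assms by (simp_all add: emeasure_cball pos)
qed

lemma V_fin:
  assumes "a > 0"
  shows "ball_volume n a \<noteq> 0" "ball_volume n a \<noteq> top"
proof -
  have pos: "unit_ball_vol (real n) \<noteq> 0" using unit_ball_vol_pos[of "real n"] by linarith
  then show "ball_volume n a \<noteq> 0" "ball_volume n a \<noteq> top"
    using assms by (simp_all add: ball_volume_def pos)
qed

lemma V_mono: "0 \<le> a \<Longrightarrow> a \<le> b \<Longrightarrow> ball_volume n a \<le> ball_volume n b"
  unfolding ball_volume_def
  by (intro ennreal_leI mult_left_mono power_mono) auto

lemma V_ratio:
  assumes "a > 0" "b \<ge> 0"
  shows "ennreal ((b / a) ^ n) * ball_volume n a = ball_volume n b"
  using assms unfolding ball_volume_def
  by (simp add: ennreal_mult'[symmetric] power_divide field_simps)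

lemma B_ratio:
  assumes "a > 0" "b \<ge> 0"
  shows "ennreal ((b / a) ^ DIM('a)) * emeasure lborel (cball (0::'a::euclidean_space) a) = emeasure lborel (cball (0::'a) b)"
  using assms by (simp add: emeasure_cball ennreal_mult'[symmetric] power_divide field_simps)

lemma B_G3:
  assumes "b > 0"
  shows "(\<integral>\<^sup>+s. indicator {-b..b} s * ball_volume (DIM('a) - 1) (sqrt (b^2 - s^2)) \<partial>lborel) = emeasure lborel (cball (0::'a::euclidean_space) b)"
proof -
  define n where "n = DIM('a) - 1"
  have dn: "DIM('a) = Suc n" unfolding n_def using DIM_positive[where 'a='a] by linarith
  have "(\<integral>\<^sup>+s. indicator {-b..b} s * ball_volume (DIM('a) - 1) (sqrt (b^2 - s^2)) \<partial>lborel)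
      = (\<integral>\<^sup>+s. indicator {-b..b} s * ennreal (unit_ball_vol (real n) * sqrt (b^2 - s^2) ^ n) \<partial>lborel)"
    unfolding n_def ball_volume_def ..
  also have "\<dots> = ennreal (unit_ball_vol (real (Suc n)) * b ^ Suc n)" by (rule G3[OF assms])
  also have "\<dots> = emeasure lborel (cball (0::'a) b)" using assms by (simp add: emeasure_cball dn)
  finally show ?thesis .
qed

context
  fixes u :: "'a::euclidean_space" and L :: "'a set"
  assumes u: "norm u = 1" and Lc: "countable L" and Lp: "\<And>l. l \<in> L \<Longrightarrow> l \<bullet> u = 0"
begin

lemma stepA:
  assumes r: "r > 0" and rho: "\<rho> > r"
  shows "(INF x. Mf u L r x / emeasure lborel (cball (0::'a) r)) * ennreal (((\<rho> - r) / \<rho>) ^ (DIM('a) - 1))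
     \<le> (INF y\<in>{y. y \<bullet> u = 0}. Nf L y \<rho> / ball_volume (DIM('a) - 1) \<rho>)"
proof (rule INF_greatest)
  fix y assume "y \<in> {y. y \<bullet> u = 0}"
  then have y: "y \<bullet> u = 0" by simp
  define m where "m = (INF x. Mf u L r x / emeasure lborel (cball (0::'a) r))"
  define Br where "Br = emeasure lborel (cball (0::'a) r)"
  have Br: "Br \<noteq> 0" "Br \<noteq> top" using B_fin[OF r] by (simp_all add: Br_def)
  have Mge: "m * Br \<le> Mf u L r z" for z
  proof -
    have "m \<le> Mf u L r z / Br" unfolding m_def Br_def by (rule INF_lower) simp
    then show ?thesis using Br by (simp add: le_ediv_iff)
  qed
  have "m * Br * ball_volume (DIM('a) - 1) (\<rho> - r) = (\<integral>\<^sup>+z. (m * Br) * indicator (cyl u y (\<rho> - r)) z \<partial>lborel)"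
    using cyl_vol[OF u y, of "\<rho> - r"] rho by (simp add: nn_integral_cmult_indicator)
  also have "\<dots> \<le> (\<integral>\<^sup>+z. indicator (cyl u y (\<rho> - r)) z * Mf u L r z \<partial>lborel)"
  proof (intro nn_integral_mono)
    fix z show "m * Br * indicator (cyl u y (\<rho> - r)) z \<le> indicator (cyl u y (\<rho> - r)) z * Mf u L r z"
      using Mge[of z] by (cases "z \<in> cyl u y (\<rho> - r)") auto
  qed
  also have "\<dots> \<le> Br * Nf L y (\<rho> - r + r)"
    unfolding Br_def by (rule avg_upper[OF u Lc Lp])
  finally have "Br * (m * ball_volume (DIM('a) - 1) (\<rho> - r)) \<le> Br * Nf L y \<rho>"
    by (simp add: mult_ac)
  then have 1: "m * ball_volume (DIM('a) - 1) (\<rho> - r) \<le> Nf L y \<rho>"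
    using Br by (simp add: ennreal_mult_le_mult_iff)
  have "m * ennreal (((\<rho> - r) / \<rho>) ^ (DIM('a) - 1)) * ball_volume (DIM('a) - 1) \<rho> = m * ball_volume (DIM('a) - 1) (\<rho> - r)"
    using V_ratio[of \<rho> "\<rho> - r"] r rho by (simp add: mult.assoc)
  then show "m * ennreal (((\<rho> - r) / \<rho>) ^ (DIM('a) - 1)) \<le> Nf L y \<rho> / ball_volume (DIM('a) - 1) \<rho>"
    using 1 V_fin[of \<rho>] r rho by (simp add: le_ediv_iff)
qed

lemma stepB:
  assumes r: "r > 0" and rho: "\<rho> > 0"
  shows "(SUP y\<in>{y. y \<bullet> u = 0}. Nf L y \<rho> / ball_volume (DIM('a) - 1) \<rho>)
     \<le> (SUP x. Mf u L r x / emeasure lborel (cball (0::'a) r)) * ennreal (((\<rho> + r) / \<rho>) ^ (DIM('a) - 1))"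
proof (rule SUP_least)
  fix y assume "y \<in> {y. y \<bullet> u = 0}"
  then have y: "y \<bullet> u = 0" by simp
  define m where "m = (SUP x. Mf u L r x / emeasure lborel (cball (0::'a) r))"
  define Br where "Br = emeasure lborel (cball (0::'a) r)"
  have Br: "Br \<noteq> 0" "Br \<noteq> top" using B_fin[OF r] by (simp_all add: Br_def)
  have Mle: "Mf u L r z \<le> m * Br" for z
  proof -
    have "Mf u L r z / Br \<le> m" unfolding m_def Br_def by (rule SUP_upper) simp
    then show ?thesis using Br by (simp add: ediv_le_iff)
  qed
  have "Br * Nf L y (\<rho> + r - r) \<le> (\<integral>\<^sup>+z. indicator (cyl u y (\<rho> + r)) z * Mf u L r z \<partial>lborel)"
    unfolding Br_def by (rule avg_lower[OF u Lc Lp])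
  also have "\<dots> \<le> (\<integral>\<^sup>+z. (m * Br) * indicator (cyl u y (\<rho> + r)) z \<partial>lborel)"
  proof (intro nn_integral_mono)
    fix z show "indicator (cyl u y (\<rho> + r)) z * Mf u L r z \<le> m * Br * indicator (cyl u y (\<rho> + r)) z"
      using Mle[of z] by (cases "z \<in> cyl u y (\<rho> + r)") auto
  qed
  also have "\<dots> = m * Br * ball_volume (DIM('a) - 1) (\<rho> + r)"
    using cyl_vol[OF u y, of "\<rho> + r"] rho r by (simp add: nn_integral_cmult_indicator)
  finally have "Br * Nf L y \<rho> \<le> Br * (m * ball_volume (DIM('a) - 1) (\<rho> + r))"
    by (simp add: mult_ac)
  then have 1: "Nf L y \<rho> \<le> m * ball_volume (DIM('a) - 1) (\<rho> + r)"
    using Br by (simp add: ennreal_mult_le_mult_iff)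
  have "m * ennreal (((\<rho> + r) / \<rho>) ^ (DIM('a) - 1)) * ball_volume (DIM('a) - 1) \<rho> = m * ball_volume (DIM('a) - 1) (\<rho> + r)"
    using V_ratio[of \<rho> "\<rho> + r"] r rho by (simp add: mult.assoc)
  then show "Nf L y \<rho> / ball_volume (DIM('a) - 1) \<rho> \<le> m * ennreal (((\<rho> + r) / \<rho>) ^ (DIM('a) - 1))"
    using 1 V_fin[of \<rho>] r rho by (simp add: ediv_le_iff)
qed

lemma Pj_perp': "Pj u x \<bullet> u = 0" by (rule Pj_inner[OF u])

lemma stepC:
  assumes R: "R > 0" and a: "a > R"
    and hyp: "\<And>\<rho> y. \<rho> \<ge> R \<Longrightarrow> y \<bullet> u = 0 \<Longrightarrow> c * ball_volume (DIM('a) - 1) \<rho> \<le> Nf L y \<rho>"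
  shows "c * ennreal ((sqrt (a^2 - R^2) / a) ^ DIM('a)) \<le> (INF x. Mf u L a x / emeasure lborel (cball (0::'a) a))"
proof (rule INF_greatest)
  fix x :: 'a
  define b where "b = sqrt (a^2 - R^2)"
  have ab: "a^2 - R^2 > 0" using R a by (simp add: power_strict_mono)
  then have b: "b > 0" unfolding b_def by simp
  have b2: "b^2 = a^2 - R^2" unfolding b_def using ab by simp
  have ba: "b \<le> a" using b2 R a b by (smt (verit) pos2 power_strict_mono zero_less_power)
  have "c * emeasure lborel (cball (0::'a) b) = (\<integral>\<^sup>+s. c * (indicator {-b..b} s * ball_volume (DIM('a) - 1) (sqrt (b^2 - s^2))) \<partial>lborel)"
  proof -
    have meas: "(\<lambda>s. indicator {-b..b} s * ball_volume (DIM('a) - 1) (sqrt (b^2 - s^2))) \<in> borel_measurable lborel"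
      unfolding ball_volume_def by measurable
    show ?thesis using nn_integral_cmult[OF meas, of c] B_G3[OF b, where 'a='a] by simp
  qed
  also have "\<dots> \<le> (\<integral>\<^sup>+s. indicator {-a..a} s * Nf L (Pj u x) (sqrt (a^2 - s^2)) \<partial>lborel)"
  proof (intro nn_integral_mono)
    fix s
    show "c * (indicator {-b..b} s * ball_volume (DIM('a) - 1) (sqrt (b^2 - s^2))) \<le> indicator {-a..a} s * Nf L (Pj u x) (sqrt (a^2 - s^2))"
    proof (cases "s \<in> {-b..b}")
      case True
      then have sa: "s \<in> {-a..a}" using ba by auto
      have "\<bar>s\<bar> \<le> b" using True by auto
      then have "\<bar>s\<bar>^2 \<le> b^2" by (intro power_mono) auto
      then have "s^2 \<le> b^2" by simp
      then have "R^2 \<le> a^2 - s^2" using b2 by simp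
      then have "R \<le> sqrt (a^2 - s^2)" using R by (simp add: real_le_rsqrt)
      then have "c * ball_volume (DIM('a) - 1) (sqrt (a^2 - s^2)) \<le> Nf L (Pj u x) (sqrt (a^2 - s^2))"
        by (intro hyp Pj_perp')
      moreover have "ball_volume (DIM('a) - 1) (sqrt (b^2 - s^2)) \<le> ball_volume (DIM('a) - 1) (sqrt (a^2 - s^2))"
        using \<open>s^2 \<le> b^2\<close> ba b by (intro V_mono real_sqrt_le_mono) (auto simp: power_mono)
      ultimately show ?thesis using True sa
        by (simp add: indicator_def) (meson dual_order.trans mult_left_mono zero_le)
    qed (auto simp: indicator_def)
  qed
  also have "\<dots> = Mf u L a x" by (rule Mf_formula[OF u Lc Lp, symmetric])
  finally have 1: "c * emeasure lborel (cball (0::'a) b) \<le> Mf u L a x" .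
  have eq: "c * ennreal ((b / a) ^ DIM('a)) * emeasure lborel (cball (0::'a) a) = c * emeasure lborel (cball (0::'a) b)"
    using B_ratio[of a b, where 'a='a] a b R by (simp add: mult.assoc)
  show "c * ennreal ((sqrt (a^2 - R^2) / a) ^ DIM('a)) \<le> Mf u L a x / emeasure lborel (cball (0::'a) a)"
    unfolding b_def[symmetric]
    by (rule le_ediv_iff[THEN iffD2]) (use 1 eq B_fin[of a, where 'a='a] a R in auto)
qed

lemma stepD:
  assumes R: "R > 0" and a: "a > 0"
    and hyp: "\<And>\<rho> y. \<rho> \<ge> 0 \<Longrightarrow> y \<bullet> u = 0 \<Longrightarrow> Nf L y \<rho> \<le> c * ball_volume (DIM('a) - 1) (sqrt (\<rho>^2 + R^2))"
  shows "(SUP x. Mf u L a x / emeasure lborel (cball (0::'a) a)) \<le> c * ennreal ((sqrt (a^2 + R^2) / a) ^ DIM('a))"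
proof (rule SUP_least)
  fix x :: 'a
  define b where "b = sqrt (a^2 + R^2)"
  have b: "b > 0" unfolding b_def using a by (simp add: add_pos_nonneg)
  have b2: "b^2 = a^2 + R^2" unfolding b_def by simp
  have ba: "a \<le> b" unfolding b_def by (metis a abs_of_pos le_add_same_cancel1 real_sqrt_abs real_sqrt_le_mono zero_le_power2)
  have "Mf u L a x = (\<integral>\<^sup>+s. indicator {-a..a} s * Nf L (Pj u x) (sqrt (a^2 - s^2)) \<partial>lborel)"
    by (rule Mf_formula[OF u Lc Lp])
  also have "\<dots> \<le> (\<integral>\<^sup>+s. c * (indicator {-b..b} s * ball_volume (DIM('a) - 1) (sqrt (b^2 - s^2))) \<partial>lborel)"
  proof (intro nn_integral_mono)
    fix s
    show "indicator {-a..a} s * Nf L (Pj u x) (sqrt (a^2 - s^2)) \<le> c * (indicator {-b..b} s * ball_volume (DIM('a) - 1) (sqrt (b^2 - s^2)))"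
    proof (cases "s \<in> {-a..a}")
      case True
      then have sb: "s \<in> {-b..b}" using ba by auto
      have "\<bar>s\<bar> \<le> a" using True by auto
      then have "\<bar>s\<bar>^2 \<le> a^2" by (intro power_mono) auto
      then have "s^2 \<le> a^2" by simp
      then have e: "sqrt (a^2 - s^2) ^ 2 + R^2 = b^2 - s^2" using b2 by simp
      have "Nf L (Pj u x) (sqrt (a^2 - s^2)) \<le> c * ball_volume (DIM('a) - 1) (sqrt (sqrt (a^2 - s^2) ^ 2 + R^2))"
        using \<open>s^2 \<le> a^2\<close> by (intro hyp Pj_perp') simp
      then show ?thesis using True sb e by (simp add: indicator_def)
    qed (auto simp: indicator_def)
  qed
  also have "\<dots> = c * emeasure lborel (cball (0::'a) b)"
  proof -
    have meas: "(\<lambda>s. indicator {-b..b} s * ball_volume (DIM('a) - 1) (sqrt (b^2 - s^2))) \<in> borel_measurable lborel"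
      unfolding ball_volume_def by measurable
    show ?thesis using nn_integral_cmult[OF meas, of c] B_G3[OF b, where 'a='a] by simp
  qed
  finally have 1: "Mf u L a x \<le> c * emeasure lborel (cball (0::'a) b)" .
  have eq: "c * ennreal ((b / a) ^ DIM('a)) * emeasure lborel (cball (0::'a) a) = c * emeasure lborel (cball (0::'a) b)"
    using B_ratio[of a b, where 'a='a] a b by (simp add: mult.assoc)
  show "Mf u L a x / emeasure lborel (cball (0::'a) a) \<le> c * ennreal ((sqrt (a^2 + R^2) / a) ^ DIM('a))"
    unfolding b_def[symmetric]
    by (rule ediv_le_iff[THEN iffD2]) (use 1 eq B_fin[of a, where 'a='a] a in auto)
qed

end

lemma tendsto_cmult_one:
  fixes c :: ennreal and f :: "real \<Rightarrow> real"
  assumes "(f \<longlongrightarrow> 1) at_top"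
  shows "((\<lambda>a. c * ennreal (f a ^ n)) \<longlongrightarrow> c) at_top"
proof -
  have "((\<lambda>a. ennreal (f a ^ n)) \<longlongrightarrow> ennreal (1 ^ n)) at_top"
    by (intro tendsto_ennrealI tendsto_power assms)
  then have "((\<lambda>a. c * ennreal (f a ^ n)) \<longlongrightarrow> c * 1) at_top"
    by (intro tendsto_mult_ennreal tendsto_const) auto
  then show ?thesis by simp
qed

context
  fixes u :: "'a::euclidean_space" and L :: "'a set"
  assumes u: "norm u = 1" and Lc: "countable L" and Lp: "\<And>l. l \<in> L \<Longrightarrow> l \<bullet> u = 0"
begin

lemma lo_eq:
  "Liminf at_top (\<lambda>a. INF x. Mf u L a x / emeasure lborel (cball (0::'a) a))
   = Liminf at_top (\<lambda>\<rho>. INF y\<in>{y. y \<bullet> u = 0}. Nf L y \<rho> / ball_volume (DIM('a) - 1) \<rho>)"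
  (is "Liminf at_top ?m = Liminf at_top ?n")
proof (rule antisym)
  have key: "?m r \<le> Liminf at_top ?n" if r: "r > 0" for r
  proof -
    have "((\<lambda>\<rho>::real. (\<rho> - r) / \<rho>) \<longlongrightarrow> 1) at_top" by real_asymp
    then have "((\<lambda>\<rho>. ?m r * ennreal (((\<rho> - r) / \<rho>) ^ (DIM('a) - 1))) \<longlongrightarrow> ?m r) at_top"
      by (rule tendsto_cmult_one)
    then have "?m r = Liminf at_top (\<lambda>\<rho>. ?m r * ennreal (((\<rho> - r) / \<rho>) ^ (DIM('a) - 1)))"
      by (intro lim_imp_Liminf[symmetric]) auto
    also have "\<dots> \<le> Liminf at_top ?n"
    proof (intro Liminf_mono)
      show "\<forall>\<^sub>F \<rho> in at_top. ?m r * ennreal (((\<rho> - r) / \<rho>) ^ (DIM('a) - 1)) \<le> ?n \<rho>"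
        using eventually_gt_at_top[of r] by eventually_elim (rule stepA[OF u Lc Lp r])
    qed
    finally show ?thesis .
  qed
  have "\<forall>\<^sub>F r in at_top. ?m r \<le> Liminf at_top ?n"
    using eventually_gt_at_top[of "0::real"] by eventually_elim (rule key)
  then show "Liminf at_top ?m \<le> Liminf at_top ?n"
    by (intro Liminf_le) auto
next
  show "Liminf at_top ?n \<le> Liminf at_top ?m"
  proof (rule dense_le)
    fix c assume c: "c < Liminf at_top ?n"
    have "\<forall>\<^sub>F \<rho> in at_top. c < ?n \<rho>"
      using le_Liminf_iff[THEN iffD1, OF order_refl] c by blast
    then obtain R0 where R0: "\<And>\<rho>. \<rho> \<ge> R0 \<Longrightarrow> c < ?n \<rho>"
      by (auto simp: eventually_at_top_linorder)
    define R where "R = max R0 1"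
    have R: "R > 0" unfolding R_def by simp
    have hyp: "c * ball_volume (DIM('a) - 1) \<rho> \<le> Nf L y \<rho>" if "\<rho> \<ge> R" "y \<bullet> u = 0" for \<rho> y
    proof -
      have "c < ?n \<rho>" using R0 that unfolding R_def by auto
      also have "?n \<rho> \<le> Nf L y \<rho> / ball_volume (DIM('a) - 1) \<rho>" by (rule INF_lower) (use that in simp)
      finally have "c \<le> Nf L y \<rho> / ball_volume (DIM('a) - 1) \<rho>" by simp
      then show ?thesis using V_fin[of \<rho> "DIM('a) - 1"] that R by (simp add: le_ediv_iff)
    qed
    have "((\<lambda>a::real. sqrt (a^2 - R^2) / a) \<longlongrightarrow> 1) at_top" by real_asymp
    then have "((\<lambda>a. c * ennreal ((sqrt (a^2 - R^2) / a) ^ DIM('a))) \<longlongrightarrow> c) at_top"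
      by (rule tendsto_cmult_one)
    then have "c = Liminf at_top (\<lambda>a. c * ennreal ((sqrt (a^2 - R^2) / a) ^ DIM('a)))"
      by (intro lim_imp_Liminf[symmetric]) auto
    also have "\<dots> \<le> Liminf at_top ?m"
    proof (intro Liminf_mono)
      show "\<forall>\<^sub>F a in at_top. c * ennreal ((sqrt (a^2 - R^2) / a) ^ DIM('a)) \<le> ?m a"
        using eventually_gt_at_top[of R] by eventually_elim (rule stepC[OF u Lc Lp R _ hyp])
    qed
    finally show "c \<le> Liminf at_top ?m" .
  qed
qed

lemma hi_eq:
  "Limsup at_top (\<lambda>a. SUP x. Mf u L a x / emeasure lborel (cball (0::'a) a))
   = Limsup at_top (\<lambda>\<rho>. SUP y\<in>{y. y \<bullet> u = 0}. Nf L y \<rho> / ball_volume (DIM('a) - 1) \<rho>)"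
  (is "Limsup at_top ?m = Limsup at_top ?n")
proof (rule antisym)
  have key: "Limsup at_top ?n \<le> ?m r" if r: "r > 0" for r
  proof -
    have "((\<lambda>\<rho>::real. (\<rho> + r) / \<rho>) \<longlongrightarrow> 1) at_top" by real_asymp
    then have "((\<lambda>\<rho>. ?m r * ennreal (((\<rho> + r) / \<rho>) ^ (DIM('a) - 1))) \<longlongrightarrow> ?m r) at_top"
      by (rule tendsto_cmult_one)
    then have "?m r = Limsup at_top (\<lambda>\<rho>. ?m r * ennreal (((\<rho> + r) / \<rho>) ^ (DIM('a) - 1)))"
      by (intro lim_imp_Limsup[symmetric]) auto
    moreover have "Limsup at_top ?n \<le> Limsup at_top (\<lambda>\<rho>. ?m r * ennreal (((\<rho> + r) / \<rho>) ^ (DIM('a) - 1)))"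
    proof (intro Limsup_mono)
      show "\<forall>\<^sub>F \<rho> in at_top. ?n \<rho> \<le> ?m r * ennreal (((\<rho> + r) / \<rho>) ^ (DIM('a) - 1))"
        using eventually_gt_at_top[of 0] by eventually_elim (rule stepB[OF u Lc Lp r])
    qed
    ultimately show ?thesis by simp
  qed
  have "\<forall>\<^sub>F r in at_top. Limsup at_top ?n \<le> ?m r"
    using eventually_gt_at_top[of "0::real"] by eventually_elim (rule key)
  then show "Limsup at_top ?n \<le> Limsup at_top ?m"
    by (intro le_Limsup) auto
next
  show "Limsup at_top ?m \<le> Limsup at_top ?n"
  proof (rule dense_ge)
    fix c assume c: "Limsup at_top ?n < c"
    have "\<forall>\<^sub>F \<rho> in at_top. ?n \<rho> < c"
      using Limsup_le_iff[THEN iffD1, OF order_refl] c by blast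
    then obtain R0 where R0: "\<And>\<rho>. \<rho> \<ge> R0 \<Longrightarrow> ?n \<rho> < c"
      by (auto simp: eventually_at_top_linorder)
    define R where "R = max R0 1"
    have R: "R > 0" unfolding R_def by simp
    have hyp0: "Nf L y \<rho> \<le> c * ball_volume (DIM('a) - 1) \<rho>" if "\<rho> \<ge> R" "y \<bullet> u = 0" for \<rho> y
    proof -
      have "Nf L y \<rho> / ball_volume (DIM('a) - 1) \<rho> \<le> ?n \<rho>" by (rule SUP_upper) (use that in simp)
      also have "?n \<rho> < c" using R0 that unfolding R_def by auto
      finally have "Nf L y \<rho> / ball_volume (DIM('a) - 1) \<rho> \<le> c" by simp
      then show ?thesis using V_fin[of \<rho> "DIM('a) - 1"] that R by (simp add: ediv_le_iff)
    qed
    have hyp: "Nf L y \<rho> \<le> c * ball_volume (DIM('a) - 1) (sqrt (\<rho>^2 + R^2))" if "\<rho> \<ge> 0" "y \<bullet> u = 0" for \<rho> y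
    proof (cases "\<rho> \<ge> R")
      case True
      have "\<rho> \<le> sqrt (\<rho>^2 + R^2)" using that(1) by (simp add: real_le_rsqrt)
      then have "ball_volume (DIM('a) - 1) \<rho> \<le> ball_volume (DIM('a) - 1) (sqrt (\<rho>^2 + R^2))"
        using that(1) by (rule V_mono[rotated])
      then show ?thesis using hyp0[OF True that(2)] by (meson dual_order.trans mult_left_mono zero_le)
    next
      case False
      have "Nf L y \<rho> \<le> Nf L y R" unfolding Nf_def
        using False by (intro emeasure_mono) auto
      also have "\<dots> \<le> c * ball_volume (DIM('a) - 1) R" using hyp0[OF order_refl that(2)] .
      also have "\<dots> \<le> c * ball_volume (DIM('a) - 1) (sqrt (\<rho>^2 + R^2))"
        using R by (intro mult_left_mono V_mono) (auto simp: real_le_rsqrt)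
      finally show ?thesis .
    qed
    have "((\<lambda>a::real. sqrt (a^2 + R^2) / a) \<longlongrightarrow> 1) at_top" by real_asymp
    then have "((\<lambda>a. c * ennreal ((sqrt (a^2 + R^2) / a) ^ DIM('a))) \<longlongrightarrow> c) at_top"
      by (rule tendsto_cmult_one)
    then have "c = Limsup at_top (\<lambda>a. c * ennreal ((sqrt (a^2 + R^2) / a) ^ DIM('a)))"
      by (intro lim_imp_Limsup[symmetric]) auto
    moreover have "Limsup at_top ?m \<le> Limsup at_top (\<lambda>a. c * ennreal ((sqrt (a^2 + R^2) / a) ^ DIM('a)))"
    proof (intro Limsup_mono)
      show "\<forall>\<^sub>F a in at_top. ?m a \<le> c * ennreal ((sqrt (a^2 + R^2) / a) ^ DIM('a))"
        using eventually_gt_at_top[of 0] by eventually_elim (rule stepD[OF u Lc Lp R _ hyp])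
    qed
    ultimately show "Limsup at_top ?m \<le> c" by simp
  qed
qed

end

lemma Pj_add_u: "norm u = 1 \<Longrightarrow> Pj u (b + s *\<^sub>R u) = Pj u b"
  by (simp add: Pj_def inner_simps norm_eq_1 algebra_simps)

lemma line_link:
  fixes q :: "'a::euclidean_space" and B :: "'a set"
  assumes q: "q \<noteq> 0"
    and inj: "inj_on (\<lambda>b. range (line_curve q b)) B"
  defines "u \<equiv> q /\<^sub>R norm q"
  shows "traj_union (line_curve q ` B) \<inter> perp q = Pj u ` B"
    and "inj_on (Pj u) B"
    and "inj_on (line_curve q) B"
    and "\<And>b. arc_length_in (line_curve q b) (cball x a) = Kf u a x (Pj u b)"
    and "norm u = 1"
    and "perp q = {y. y \<bullet> u = 0}"
proof -
  have nq: "norm q > 0" using q by simp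
  show u: "norm u = 1" unfolding u_def using q by simp
  have qu: "q = norm q *\<^sub>R u" unfolding u_def using q by simp
  show perp: "perp q = {y. y \<bullet> u = 0}"
    unfolding perp_def u_def using nq by (auto simp: inner_simps)
  have lineq: "line_curve q b t = b + (t * norm q) *\<^sub>R u" for b t
    unfolding line_curve_def by (subst qu) simp
  have Pj_line: "Pj u (line_curve q b t) = Pj u b" for b t
    unfolding lineq by (rule Pj_add_u[OF u])
  have rng: "range (line_curve q b) \<inter> perp q = {Pj u b}" for b
  proof
    show "range (line_curve q b) \<inter> perp q \<subseteq> {Pj u b}"
    proof
      fix z assume z: "z \<in> range (line_curve q b) \<inter> perp q"
      then obtain t where t: "z = line_curve q b t" by auto
      have "z \<bullet> u = 0" using z perp by auto
      then have "z = Pj u z" by (simp add: Pj_def)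
      also have "\<dots> = Pj u b" using t Pj_line by simp
      finally show "z \<in> {Pj u b}" by simp
    qed
  next
    have "line_curve q b (- (b \<bullet> u) / norm q) = Pj u b"
      unfolding lineq Pj_def using nq by simp
    moreover have "Pj u b \<bullet> u = 0" by (rule Pj_inner[OF u])
    ultimately show "{Pj u b} \<subseteq> range (line_curve q b) \<inter> perp q"
      using perp by (auto intro!: range_eqI[where x="- (b \<bullet> u) / norm q"] simp del: line_curve_def)
  qed
  have "traj_union (line_curve q ` B) \<inter> perp q = (\<Union>b\<in>B. range (line_curve q b) \<inter> perp q)"
    unfolding traj_union_def by auto
  also have "\<dots> = (\<Union>b\<in>B. {Pj u b})" using rng by simp
  finally show "traj_union (line_curve q ` B) \<inter> perp q = Pj u ` B" by auto
  have same_range: "range (line_curve q b) = range (line_curve q b')" if "Pj u b = Pj u b'" for b b'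
  proof -
    have "b' = Pj u b' + (b' \<bullet> u) *\<^sub>R u" by (simp add: Pj_def)
    also have "\<dots> = Pj u b + (b' \<bullet> u) *\<^sub>R u" using that by simp
    also have "\<dots> = b + (b' \<bullet> u - b \<bullet> u) *\<^sub>R u" by (simp add: Pj_def scaleR_diff_left)
    also have "\<dots> = b + ((b' \<bullet> u - b \<bullet> u) / norm q * norm q) *\<^sub>R u" using nq by simp
    finally have b': "b' = b + ((b' \<bullet> u - b \<bullet> u) / norm q * norm q) *\<^sub>R u" .
    have e1: "line_curve q b' t = line_curve q b (t + (b' \<bullet> u - b \<bullet> u) / norm q)" for t
      unfolding lineq using nq by (subst b') (simp add: algebra_simps)
    have e2: "line_curve q b t = line_curve q b' (t - (b' \<bullet> u - b \<bullet> u) / norm q)" for t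
      unfolding lineq using nq by (subst b') (simp add: algebra_simps)
    show ?thesis
    proof (intro equalityI subsetI)
      fix z assume "z \<in> range (line_curve q b)"
      then obtain t where "z = line_curve q b t" by auto
      then show "z \<in> range (line_curve q b')" using e2[of t] by auto
    next
      fix z assume "z \<in> range (line_curve q b')"
      then obtain t where "z = line_curve q b' t" by auto
      then show "z \<in> range (line_curve q b)" using e1[of t] by auto
    qed
  qed
  show "inj_on (Pj u) B"
    using inj same_range unfolding inj_on_def by blast
  show "inj_on (line_curve q) B"
    using inj unfolding inj_on_def by metis
  fix b
  have vd: "vector_derivative (line_curve q b) (at t) = q" for t
    unfolding line_curve_def
    by (rule vector_derivative_at) (auto intro!: derivative_eq_intros)
  have meas: "(\<lambda>s. indicator (cball x a) (Pj u b + s *\<^sub>R u) :: ennreal) \<in> borel_measurable borel"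
  proof -
    have "(\<lambda>s. indicator (cball x a) (Pj u b + s *\<^sub>R u) :: ennreal) = indicator {s. dist x (Pj u b + s *\<^sub>R u) \<le> a}"
      by (auto simp: fun_eq_iff indicator_def)
    also have "\<dots> \<in> borel_measurable borel"
      by (intro borel_measurable_indicator borel_closed closed_Collect_le continuous_intros)
    finally show ?thesis .
  qed
  have "Kf u a x (Pj u b) = ennreal \<bar>norm q\<bar> * (\<integral>\<^sup>+t. indicator (cball x a) (Pj u b + (b \<bullet> u + norm q * t) *\<^sub>R u) \<partial>lborel)"
    unfolding Kf_def by (rule nn_integral_real_affine[OF meas]) (use nq in simp)
  also have "\<dots> = (\<integral>\<^sup>+t. indicator {t. line_curve q b t \<in> cball x a} t * ennreal (norm (vector_derivative (line_curve q b) (at t))) \<partial>lborel)"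
  proof -
    have "Pj u b + (b \<bullet> u + norm q * t) *\<^sub>R u = line_curve q b t" for t
      unfolding lineq by (simp add: Pj_def algebra_simps)
    then have e: "(\<lambda>t. indicator (cball x a) (Pj u b + (b \<bullet> u + norm q * t) *\<^sub>R u) :: ennreal) = (\<lambda>t. indicator (cball x a) (line_curve q b t))"
      by (simp add: fun_eq_iff)
    have m2: "(\<lambda>t. indicator (cball x a) (line_curve q b t) :: ennreal) \<in> borel_measurable lborel"
    proof -
      have "(\<lambda>t. indicator (cball x a) (line_curve q b t) :: ennreal) = indicator {t. dist x (b + t *\<^sub>R q) \<le> a}"
        by (auto simp: fun_eq_iff indicator_def line_curve_def)
      also have "\<dots> \<in> borel_measurable borel"
        by (intro borel_measurable_indicator borel_closed closed_Collect_le continuous_intros)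
      finally show ?thesis by simp
    qed
    have "ennreal \<bar>norm q\<bar> * (\<integral>\<^sup>+t. indicator (cball x a) (Pj u b + (b \<bullet> u + norm q * t) *\<^sub>R u) \<partial>lborel)
       = (\<integral>\<^sup>+t. ennreal (norm q) * indicator (cball x a) (line_curve q b t) \<partial>lborel)"
      unfolding e by (simp add: nn_integral_cmult[OF m2])
    also have "\<dots> = (\<integral>\<^sup>+t. indicator {t. line_curve q b t \<in> cball x a} t * ennreal (norm (vector_derivative (line_curve q b) (at t))) \<partial>lborel)"
      by (intro nn_integral_cong) (simp add: vd indicator_def)
    finally show ?thesis .
  qed
  finally show "arc_length_in (line_curve q b) (cball x a) = Kf u a x (Pj u b)"
    unfolding arc_length_in_def by simp
qed

theorem lemma3p1:
  fixes q :: "'a::euclidean_space" and B :: "'a set"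
  assumes "q \<noteq> 0"
    and "countable B"
    and "inj_on (\<lambda>b. range (line_curve q b)) B"
  defines "T \<equiv> line_curve q ` B"
  defines "\<Lambda> \<equiv> traj_union T \<inter> perp q"
  shows "lower_density q \<Lambda> = lower_line_density T
         \<and> upper_density q \<Lambda> = upper_line_density T
         \<and> (homogeneous T \<longleftrightarrow> lower_density q \<Lambda> = upper_density q \<Lambda>)
         \<and> (lower_density q \<Lambda> = upper_density q \<Lambda> \<longrightarrow>
              line_density T = lower_density q \<Lambda> \<and> line_density T = upper_density q \<Lambda> \<and>
              (\<forall>x\<in>perp q. ((\<lambda>a::real. emeasure (count_space UNIV) (\<Lambda> \<inter> cball x a)
                   / ball_volume (DIM('a) - 1) a) \<longlongrightarrow> line_density T) at_top))"
proof -
  define u where "u = q /\<^sub>R norm q"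
  note link = line_link[OF assms(1,3), folded u_def]
  have u: "norm u = 1" by (rule link(5))
  have Lam: "\<Lambda> = Pj u ` B" unfolding \<Lambda>_def T_def by (rule link(1))
  have Lc: "countable \<Lambda>" unfolding Lam using assms(2) by simp
  have Lp: "l \<bullet> u = 0" if "l \<in> \<Lambda>" for l using that unfolding Lam by (auto intro: Pj_inner[OF u])
  have perp: "perp q = {y. y \<bullet> u = 0}" by (rule link(6))
  have tm: "traj_mass T a x = Mf u \<Lambda> a x" for a x
  proof -
    have "traj_mass T a x = (\<integral>\<^sup>+b. arc_length_in (line_curve q b) (cball x a) \<partial>count_space B)"
      unfolding traj_mass_def T_def
      by (rule nn_integral_bij_count_space[symmetric]) (use link(3) in \<open>simp add: bij_betw_def\<close>)
    also have "\<dots> = (\<integral>\<^sup>+b. Kf u a x (Pj u b) \<partial>count_space B)" by (simp add: link(4))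
    also have "\<dots> = Mf u \<Lambda> a x" unfolding Mf_def Lam
      by (rule nn_integral_bij_count_space) (use link(2) in \<open>simp add: bij_betw_def\<close>)
    finally show ?thesis .
  qed
  have lo: "lower_density q \<Lambda> = lower_line_density T"
    unfolding lower_density_def lower_line_density_def tm perp
    using lo_eq[OF u Lc Lp] by (simp add: Nf_def)
  have hi: "upper_density q \<Lambda> = upper_line_density T"
    unfolding upper_density_def upper_line_density_def tm perp
    using hi_eq[OF u Lc Lp] by (simp add: Nf_def)
  have conv: "((\<lambda>a::real. emeasure (count_space UNIV) (\<Lambda> \<inter> cball x a)
                   / ball_volume (DIM('a) - 1) a) \<longlongrightarrow> line_density T) at_top"
    if eq: "lower_density q \<Lambda> = upper_density q \<Lambda>" and x: "x \<in> perp q" for x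
  proof -
    define f where "f = (\<lambda>a::real. emeasure (count_space UNIV) (\<Lambda> \<inter> cball x a) / ball_volume (DIM('a) - 1) a)"
    have lef: "(INF y\<in>perp q. emeasure (count_space UNIV) (\<Lambda> \<inter> cball y a) / ball_volume (DIM('a) - 1) a) \<le> f a" for a
      unfolding f_def by (rule INF_lower[OF x])
    have gef: "f a \<le> (SUP y\<in>perp q. emeasure (count_space UNIV) (\<Lambda> \<inter> cball y a) / ball_volume (DIM('a) - 1) a)" for a
      unfolding f_def by (rule SUP_upper[OF x])
    have 1: "lower_density q \<Lambda> \<le> Liminf at_top f"
      unfolding lower_density_def by (intro Liminf_mono always_eventually allI lef)
    have 2: "Limsup at_top f \<le> upper_density q \<Lambda>"
      unfolding upper_density_def by (intro Limsup_mono always_eventually allI gef)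
    have 3: "Liminf at_top f \<le> Limsup at_top f" by (rule Liminf_le_Limsup) simp
    have "Liminf at_top f = line_density T" "Limsup at_top f = line_density T"
      using 1 2 3 eq lo unfolding line_density_def by (metis antisym order_trans)+
    then show ?thesis unfolding f_def[symmetric] by (intro Liminf_eq_Limsup) auto
  qed
  show ?thesis
    using lo hi conv unfolding homogeneous_def line_density_def by auto
qed

end
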